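(* Let $\bar f\colon\mathbb{R}^d\to\mathbb{R}^d$ be globally Lipschitz and consider the mean flow $\frac{d}{dt}\vartheta_t=\bar f(\vartheta_t)$. (a) If (V4) holds, then (V4') holds. (b) If the limit $\bar f_\infty(\theta)=\lim_{r\to\infty}r^{-1}\bar f(r\theta)$ exists for every $\theta\in\mathbb{R}^d$ and the origin is asymptotically stable for the ODE@$\infty$, $\frac{d}{dt}\vartheta^\infty_t=\bar f_\infty(\vartheta^\infty_t)$, then (V4') holds.
   Context: (V4): there exist a $C^1$ function $V\colon\mathbb{R}^d\to[1,\infty)$ and a constant $\delta_0>0$ such that every solution of the mean flow satisfies $\frac{d}{d\tau}V(\vartheta_\tau)\le-\delta_0V(\vartheta_\tau)$ at every time $\tau\ge0$ with $\|\vartheta_\tau\|\ge\delta_0^{-1}$; moreover there is $L_V<\infty$ with $|V(\theta')-V(\theta)|\le L_V\|\theta'-\theta\|$ for all $\theta,\theta'$, and $V(\theta)\ge\|\theta\|$ when $\|\theta\|\ge\delta_0^{-1}$. (V4'): there exist a function $V\colon\mathbb{R}^d\to\mathbb{R}_+$ and constants $L_V<\infty$, $\delta_0,\delta_1,T>0$ such that $|V(\theta')-V(\theta)|\le L_V\|\theta'-\theta\|$ for all $\theta,\theta'$, $V(\theta)\ge\|\theta\|$ when $\|\theta\|\ge\delta_0^{-1}$, and every solution of the mean flow satisfies $V(\vartheta_{\tau+T})-V(\vartheta_\tau)\le-\delta_1\|\vartheta_\tau\|$ for all $\tau\ge0$ with $\|\vartheta_\tau\|>\delta_1^{-1}$.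 *)

theory Defs
  imports "HOL-Analysis.Analysis"
begin

definition ode_sol :: "('a::euclidean_space \<Rightarrow> 'a) \<Rightarrow> (real \<Rightarrow> 'a) \<Rightarrow> bool" where
  "ode_sol g x \<longleftrightarrow> (\<forall>t\<ge>0. (x has_vector_derivative g (x t)) (at t within {0..}))"

definition C1_fun :: "('a::euclidean_space \<Rightarrow> real) \<Rightarrow> bool" where
  "C1_fun V \<longleftrightarrow> (\<exists>V' :: 'a \<Rightarrow> 'a \<Rightarrow>\<^sub>L real.
      (\<forall>x. (V has_derivative blinfun_apply (V' x)) (at x)) \<and> continuous_on UNIV V')"

definition V4 :: "('a::euclidean_space \<Rightarrow> 'a) \<Rightarrow> bool" where
  "V4 fbar \<longleftrightarrow> (\<exists>(V :: 'a \<Rightarrow> real) \<delta>0 LV.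
      C1_fun V \<and> (\<forall>\<theta>. V \<theta> \<ge> 1) \<and> \<delta>0 > 0 \<and>
      (\<forall>x. ode_sol fbar x \<longrightarrow>
         (\<forall>\<tau>\<ge>0. norm (x \<tau>) \<ge> 1 / \<delta>0 \<longrightarrow>
            (\<forall>D. ((\<lambda>t. V (x t)) has_real_derivative D) (at \<tau> within {0..}) \<longrightarrow>
                 D \<le> - \<delta>0 * V (x \<tau>)))) \<and>
      (\<forall>\<theta> \<theta>'. \<bar>V \<theta>' - V \<theta>\<bar> \<le> LV * norm (\<theta>' - \<theta>)) \<and>
      (\<forall>\<theta>. norm \<theta> \<ge> 1 / \<delta>0 \<longrightarrow> V \<theta> \<ge> norm \<theta>))"

definition V4' :: "('a::euclidean_space \<Rightarrow> 'a) \<Rightarrow> bool" where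
  "V4' fbar \<longleftrightarrow> (\<exists>(V :: 'a \<Rightarrow> real) LV \<delta>0 \<delta>1 T.
      (\<forall>\<theta>. V \<theta> \<ge> 0) \<and> \<delta>0 > 0 \<and> \<delta>1 > 0 \<and> T > 0 \<and>
      (\<forall>\<theta> \<theta>'. \<bar>V \<theta>' - V \<theta>\<bar> \<le> LV * norm (\<theta>' - \<theta>)) \<and>
      (\<forall>\<theta>. norm \<theta> \<ge> 1 / \<delta>0 \<longrightarrow> V \<theta> \<ge> norm \<theta>) \<and>
      (\<forall>x. ode_sol fbar x \<longrightarrow>
         (\<forall>\<tau>\<ge>0. norm (x \<tau>) > 1 / \<delta>1 \<longrightarrow>
            V (x (\<tau> + T)) - V (x \<tau>) \<le> - \<delta>1 * norm (x \<tau>))))"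

definition origin_asymp_stable :: "('a::euclidean_space \<Rightarrow> 'a) \<Rightarrow> bool" where
  "origin_asymp_stable g \<longleftrightarrow>
     (\<forall>\<epsilon>>0. \<exists>\<delta>>0. \<forall>x. ode_sol g x \<and> norm (x 0) < \<delta> \<longrightarrow> (\<forall>t\<ge>0. norm (x t) < \<epsilon>)) \<and>
     (\<exists>\<delta>>0. \<forall>x. ode_sol g x \<and> norm (x 0) < \<delta> \<longrightarrow> (x \<longlongrightarrow> 0) at_top)"

definition f_infty :: "('a::euclidean_space \<Rightarrow> 'a) \<Rightarrow> 'a \<Rightarrow> 'a" where
  "f_infty fbar \<theta> = Lim at_top (\<lambda>r. (1 / r) *\<^sub>R fbar (r *\<^sub>R \<theta>))"

end

theory Submission imports Defs begin

lemma growth_bound: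
  fixes d :: "real \<Rightarrow> 'a::real_normed_vector"
  assumes der: "\<And>t. t \<in> {0..T} \<Longrightarrow> (d has_vector_derivative d' t) (at t within {0..})"
    and bnd: "\<And>t. t \<in> {0..T} \<Longrightarrow> norm (d' t) \<le> L * norm (d t) + \<eta>"
    and d0: "norm (d 0) < c" and c: "c > 0" and L: "L \<ge> 0" and eta: "\<eta> \<ge> 0"
    and K: "K > L + \<eta> / c" and t: "t \<in> {0..T}"
  shows "norm (d t) < c * exp (K * t)"
proof (rule ccontr)
  assume nt: "\<not> ?thesis"
  define S where "S = {s \<in> {0..T}. c * exp (K * s) \<le> norm (d s)}"
  have cont: "continuous_on {0..T} d"
    unfolding continuous_on_eq_continuous_within
  proof
    fix x assume x: "x \<in> {0..T}"
    have "continuous (at x within {0..}) d" using der[OF x] by (rule has_vector_derivative_continuous)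
    then show "continuous (at x within {0..T}) d" by (rule continuous_within_subset) (auto simp: subset_iff)
  qed
  have "closed S" unfolding S_def
    by (intro continuous_on_closed_Collect_le continuous_intros cont)
  have tS: "t \<in> S" using nt t by (auto simp: S_def)
  have bdd: "bdd_below S" unfolding S_def by (auto intro: bdd_belowI[where m=0])
  define t0 where "t0 = Inf S"
  have t0S: "t0 \<in> S" unfolding t0_def using closed_contains_Inf[OF _ bdd \<open>closed S\<close>] tS by blast
  then have t0T: "t0 \<in> {0..T}" and N1: "c * exp (K * t0) \<le> norm (d t0)" by (auto simp: S_def)
  have "t0 \<noteq> 0" using N1 d0 by auto
  then have t0pos: "t0 > 0" using t0T by auto
  have below: "norm (d s) < c * exp (K * s)" if "0 \<le> s" "s < t0" for s
  proof (rule ccontr)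
    assume "\<not> ?thesis"
    then have "s \<in> S" using that t0T by (auto simp: S_def)
    then have "t0 \<le> s" unfolding t0_def by (rule cInf_lower[OF _ bdd])
    then show False using that by auto
  qed
  define \<phi> where "\<phi> = c * exp (K * t0)"
  define N where "N = norm (d t0)"
  define D where "D = d' t0"
  have phic: "\<phi> \<ge> c" unfolding \<phi>_def using c t0pos K L eta
  proof -
    have "K \<ge> 0" using K L eta c by (smt (verit) divide_nonneg_pos)
    then have "exp (K * t0) \<ge> 1" using t0pos by simp
    then show "c \<le> c * exp (K * t0)" using c by simp
  qed
  define g where "g = K * \<phi> - (L * \<phi> + \<eta>)"
  have "(K - L) * c > \<eta>" using K c by (simp add: field_simps)
  moreover have "(K - L) * \<phi> \<ge> (K - L) * c"
  proof -
    have "\<eta> / c \<ge> 0" using eta c by simp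
    then have "K - L \<ge> 0" using K by linarith
    then show ?thesis using phic by (simp add: mult_left_mono)
  qed
  ultimately have gpos: "g > 0" unfolding g_def by (simp add: algebra_simps)
  define \<epsilon> where "\<epsilon> = g / 4"
  have epos: "\<epsilon> > 0" using gpos by (simp add: \<epsilon>_def)
  have dder: "(d has_derivative (\<lambda>h. h *\<^sub>R D)) (at t0 within {0..})"
    using der[OF t0T] by (simp add: has_vector_derivative_def D_def)
  then obtain \<delta>1 where \<delta>1: "\<delta>1 > 0" "\<And>y. y \<in> {0..} \<Longrightarrow> norm (y - t0) < \<delta>1 \<Longrightarrow>
      norm (d y - d t0 - (y - t0) *\<^sub>R D) \<le> \<epsilon> * norm (y - t0)"
    unfolding has_derivative_within_alt using epos by blast
  have "((\<lambda>s. c * exp (K * s)) has_real_derivative (K * \<phi>)) (at t0)"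
    unfolding \<phi>_def by (auto intro!: derivative_eq_intros simp: algebra_simps)
  then have "((\<lambda>s. c * exp (K * s)) has_derivative (*) (K * \<phi>)) (at t0 within UNIV)"
    by (simp add: has_field_derivative_def)
  then obtain \<delta>2 where \<delta>2: "\<delta>2 > 0" "\<And>y. norm (y - t0) < \<delta>2 \<Longrightarrow>
      norm (c * exp (K * y) - c * exp (K * t0) - (K * \<phi>) * (y - t0)) \<le> \<epsilon> * norm (y - t0)"
    unfolding has_derivative_within_alt using epos by blast
  define m where "m = min (min \<delta>1 \<delta>2) (min t0 (1 / (L + 1)))"
  have "1 / (L + 1) > 0" using L by simp
  then have mpos: "m > 0" using \<delta>1 \<delta>2 t0pos by (simp add: m_def)
  have mle: "m \<le> \<delta>1" "m \<le> \<delta>2" "m \<le> t0" "m \<le> 1 / (L + 1)" by (simp_all add: m_def)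
  define h where "h = m / 2"
  have hpos: "h > 0" using mpos by (simp add: h_def)
  have h1: "h < \<delta>1" "h < \<delta>2" "h < t0" "h < 1 / (L + 1)" using mle mpos by (simp_all add: h_def)
  have hL: "h * L \<le> 1"
  proof -
    have "h * (L + 1) < 1" using h1(4) L by (simp add: field_simps)
    then show ?thesis using hpos by (simp add: algebra_simps)
  qed
  define y where "y = t0 - h"
  have y0: "0 \<le> y" "y < t0" using h1 hpos by (auto simp: y_def)
  have e1: "norm (d y - d t0 - (y - t0) *\<^sub>R D) \<le> \<epsilon> * h"
    using \<delta>1(2)[of y] y0 h1 hpos by (simp add: y_def)
  have e2: "norm (c * exp (K * y) - \<phi> - (K * \<phi>) * (y - t0)) \<le> \<epsilon> * h"
    using \<delta>2(2)[of y] y0 h1 hpos by (simp add: y_def \<phi>_def)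
  have "d t0 = d y - (y - t0) *\<^sub>R D - (d y - d t0 - (y - t0) *\<^sub>R D)" by simp
  then have "N \<le> norm (d y) + norm ((y - t0) *\<^sub>R D) + norm (d y - d t0 - (y - t0) *\<^sub>R D)"
    unfolding N_def by (metis norm_triangle_ineq4 norm_triangle_le_diff order_trans add_right_mono)
  also have "norm ((y - t0) *\<^sub>R D) = h * norm D" using hpos by (simp add: y_def)
  finally have A: "N \<le> norm (d y) + h * norm D + \<epsilon> * h" using e1 by linarith
  have B: "norm (d y) < \<phi> - h * K * \<phi> + \<epsilon> * h"
    using below[OF y0] e2 by (simp add: y_def abs_le_iff algebra_simps)
  have C: "norm D \<le> L * N + \<eta>" using bnd[OF t0T] by (simp add: D_def N_def)
  have "h * norm D \<le> h * (L * N + \<eta>)" using C hpos by (simp add: mult_left_mono)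
  then have "N < \<phi> - h * K * \<phi> + 2 * \<epsilon> * h + h * (L * N + \<eta>)" using A B by linarith
  define a where "a = N - \<phi>"
  have NN: "N = \<phi> + a" by (simp add: a_def)
  have "h * (L * N + \<eta>) = h * L * \<phi> + h * L * a + h * \<eta>" by (simp add: NN algebra_simps)
  moreover note \<open>N < \<phi> - h * K * \<phi> + 2 * \<epsilon> * h + h * (L * N + \<eta>)\<close>
  moreover have "a * (1 - h * L) = a - h * L * a" by (simp add: algebra_simps)
  moreover have "h * (2 * \<epsilon> - g) = 2 * \<epsilon> * h - h * K * \<phi> + h * L * \<phi> + h * \<eta>"
    by (simp add: g_def algebra_simps)
  ultimately have "a * (1 - h * L) < h * (2 * \<epsilon> - g)" using NN by linarith
  moreover have "a * (1 - h * L) \<ge> 0" using N1 hL by (simp add: a_def N_def \<phi>_def)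
  moreover have "h * (2 * \<epsilon> - g) < 0" using hpos gpos by (simp add: \<epsilon>_def mult_pos_neg)
  ultimately show False by linarith
qed


primrec picard :: "('a::banach \<Rightarrow> 'a) \<Rightarrow> 'a \<Rightarrow> nat \<Rightarrow> real \<Rightarrow> 'a" where
  "picard g \<theta> 0 = (\<lambda>t. \<theta>)"
| "picard g \<theta> (Suc n) = (\<lambda>t. \<theta> + integral {0..t} (\<lambda>s. g (picard g \<theta> n s)))"

lemma picard_exists:
  fixes g :: "'a::euclidean_space \<Rightarrow> 'a"
  assumes lip: "\<And>u v. norm (g u - g v) \<le> L * norm (u - v)" and L: "L \<ge> 0"
  shows "\<exists>x. x 0 = \<theta> \<and> ode_sol g x"
proof -
  let ?p = "picard g \<theta>"
  have "L-lipschitz_on UNIV g" using lip L by (intro lipschitz_onI) (auto simp: dist_norm)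
  then have gcont: "continuous_on UNIV g" by (rule lipschitz_on_continuous_on)
  have cont: "continuous_on {0..b} (?p n)" for n b
  proof (induction n arbitrary: b)
    case 0
    then show ?case by (simp add: continuous_on_const)
  next
    case (Suc n)
    have "continuous_on {0..b} (\<lambda>s. g (?p n s))"
      using continuous_on_compose2[OF gcont Suc.IH] by auto
    then have "continuous_on {0..b} (\<lambda>t. integral {0..t} (\<lambda>s. g (?p n s)))"
      by (intro indefinite_integral_continuous_1 integrable_continuous_real)
    then show ?case by (auto intro!: continuous_intros)
  qed
  have gpcont: "continuous_on {0..b} (\<lambda>s. g (?p n s))" for n b
    using continuous_on_compose2[OF gcont cont] by auto
  have gpint: "(\<lambda>s. g (?p n s)) integrable_on {0..b}" for n b
    by (intro integrable_continuous_real gpcont)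
  define M where "M = norm (g \<theta>)"
  have M: "M \<ge> 0" by (simp add: M_def)
  have bound: "norm (?p (Suc n) t - ?p n t) \<le> M * L ^ n * t ^ Suc n / fact (Suc n)" if t: "t \<ge> 0" for n t
    using t
  proof (induction n arbitrary: t)
    case 0
    then show ?case by (simp add: M_def)
  next
    case (Suc n)
    have "?p (Suc (Suc n)) t - ?p (Suc n) t =
        integral {0..t} (\<lambda>s. g (?p (Suc n) s)) - integral {0..t} (\<lambda>s. g (?p n s))"
      by (simp only: picard.simps) simp
    also have "\<dots> = integral {0..t} (\<lambda>s. g (?p (Suc n) s) - g (?p n s))"
      by (rule integral_diff[OF gpint gpint, symmetric])
    also have "norm \<dots> \<le> integral {0..t} (\<lambda>s. L * (M * L ^ n * s ^ Suc n / fact (Suc n)))"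
    proof (rule integral_norm_bound_integral)
      show "(\<lambda>s. g (?p (Suc n) s) - g (?p n s)) integrable_on {0..t}"
        by (intro integrable_diff gpint)
      show "(\<lambda>s. L * (M * L ^ n * s ^ Suc n / fact (Suc n))) integrable_on {0..t}"
        by (intro integrable_continuous_real continuous_intros) auto
      fix s assume s: "s \<in> {0..t}"
      have "norm (g (?p (Suc n) s) - g (?p n s)) \<le> L * norm (?p (Suc n) s - ?p n s)"
        by (rule lip)
      also have "\<dots> \<le> L * (M * L ^ n * s ^ Suc n / fact (Suc n))"
        using Suc.IH[of s] s L by (intro mult_left_mono) auto
      finally show "norm (g (?p (Suc n) s) - g (?p n s)) \<le> L * (M * L ^ n * s ^ Suc n / fact (Suc n))" .
    qed
    also have "integral {0..t} (\<lambda>s. L * (M * L ^ n * s ^ Suc n / fact (Suc n))) =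
        M * L ^ Suc n * t ^ Suc (Suc n) / fact (Suc (Suc n))"
    proof (rule integral_unique)
      define c where "c = M * L ^ Suc n / fact (Suc (Suc n))"
      have "((\<lambda>s. c * s ^ Suc (Suc n)) has_vector_derivative
             L * (M * L ^ n * x ^ Suc n / fact (Suc n))) (at x within {0..t})" for x
      proof -
        have "((\<lambda>s. s ^ Suc (Suc n)) has_real_derivative real (Suc (Suc n)) * x ^ Suc n) (at x within {0..t})"
          using DERIV_pow[of "Suc (Suc n)" x "{0..t}"] by simp
        then have "((\<lambda>s. c * s ^ Suc (Suc n)) has_real_derivative c * (real (Suc (Suc n)) * x ^ Suc n)) (at x within {0..t})"
          by (rule DERIV_cmult)
        moreover have "c * (real (Suc (Suc n)) * x ^ Suc n) = L * (M * L ^ n * x ^ Suc n / fact (Suc n))"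
        proof -
          define F where "F = (fact (Suc n) :: real)"
          have F: "F > 0" by (simp add: F_def)
          have "fact (Suc (Suc n)) = real (Suc (Suc n)) * F" unfolding F_def by (rule fact_Suc)
          then have cc: "c = M * L ^ Suc n / (real (Suc (Suc n)) * F)" by (simp add: c_def)
          define k where "k = real (Suc (Suc n))"
          have k: "k > 0" by (simp add: k_def)
          have "c * (k * x ^ Suc n) = L * (M * L ^ n * x ^ Suc n / F)"
            using F k unfolding cc k_def[symmetric] by (simp add: field_simps)
          then show ?thesis unfolding F_def k_def .
        qed
        ultimately show ?thesis
          by (simp add: has_real_derivative_iff_has_vector_derivative)
      qed
      from fundamental_theorem_of_calculus[OF Suc.prems this]
      show "((\<lambda>s. L * (M * L ^ n * s ^ Suc n / fact (Suc n))) has_integral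
          M * L ^ Suc n * t ^ Suc (Suc n) / fact (Suc (Suc n))) {0..t}"
        by (simp add: c_def)
    qed
    finally show ?case .
  qed
  define X where "X t = \<theta> + (\<Sum>i. ?p (Suc i) t - ?p i t)" for t
  have ulim: "uniform_limit {0..b} ?p X sequentially" if b: "b \<ge> 0" for b
  proof -
    have W: "uniform_limit {0..b} (\<lambda>N t. \<Sum>i<N. ?p (Suc i) t - ?p i t) (\<lambda>t. \<Sum>i. ?p (Suc i) t - ?p i t) sequentially"
    proof (rule Weierstrass_m_test)
      fix i t assume t: "t \<in> {0..b}"
      have "norm (?p (Suc i) t - ?p i t) \<le> M * L ^ i * t ^ Suc i / fact (Suc i)" using bound t by auto
      also have "\<dots> \<le> M * L ^ i * b ^ Suc i / fact (Suc i)" using t M L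
        by (intro divide_right_mono mult_left_mono power_mono) auto
      finally show "norm (?p (Suc i) t - ?p i t) \<le> M * L ^ i * b ^ Suc i / fact (Suc i)" .
    next
      show "summable (\<lambda>i. M * L ^ i * b ^ Suc i / fact (Suc i))"
      proof (rule summable_comparison_test)
        have "summable (\<lambda>i. inverse (fact i) * (L * b) ^ i)" by (rule summable_exp)
        then show "summable (\<lambda>i. (M * b) * (inverse (fact i) * (L * b) ^ i))" by (rule summable_mult)
        show "\<exists>N. \<forall>n\<ge>N. norm (M * L ^ n * b ^ Suc n / fact (Suc n)) \<le> (M * b) * (inverse (fact n) * (L * b) ^ n)"
        proof (intro exI allI impI)
          fix n :: nat
          have nn: "M * L ^ n * b ^ Suc n \<ge> 0" using M L b by simp
          have "norm (M * L ^ n * b ^ Suc n / fact (Suc n)) = M * L ^ n * b ^ Suc n / fact (Suc n)"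
            using nn by simp
          also have "\<dots> \<le> M * L ^ n * b ^ Suc n / fact n"
            using nn by (intro divide_left_mono) (auto simp: fact_mono)
          also have "\<dots> = (M * b) * (inverse (fact n) * (L * b) ^ n)"
            by (simp add: field_simps power_mult_distrib)
          finally show "norm (M * L ^ n * b ^ Suc n / fact (Suc n)) \<le> (M * b) * (inverse (fact n) * (L * b) ^ n)" .
        qed
      qed
    qed
    show ?thesis
    proof (rule uniform_limitI)
      fix e :: real assume "e > 0"
      from uniform_limitD[OF W this]
      show "\<forall>\<^sub>F n in sequentially. \<forall>t\<in>{0..b}. dist (?p n t) (X t) < e"
      proof (rule eventually_mono)
        fix n assume *: "\<forall>t\<in>{0..b}. dist (\<Sum>i<n. ?p (Suc i) t - ?p i t) (\<Sum>i. ?p (Suc i) t - ?p i t) < e"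
        show "\<forall>t\<in>{0..b}. dist (?p n t) (X t) < e"
        proof
          fix t assume t: "t \<in> {0..b}"
          have "?p n t = \<theta> + (\<Sum>i<n. ?p (Suc i) t - ?p i t)"
            using sum_lessThan_telescope[of "\<lambda>i. ?p i t" n] by simp
          then show "dist (?p n t) (X t) < e" using *[rule_format, OF t]
            by (simp add: X_def dist_add_cancel)
        qed
      qed
    qed
  qed
  have Xcont: "continuous_on {0..b} X" if "b \<ge> 0" for b
    by (rule uniform_limit_theorem[OF always_eventually[OF allI[OF cont]] ulim[OF that]]) simp
  have XI: "X t = \<theta> + integral {0..t} (\<lambda>s. g (X s))" if t: "t \<ge> 0" for t
  proof -
    have ul2: "uniform_limit {0..t} (\<lambda>n s. g (?p n s)) (\<lambda>s. g (X s)) sequentially"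
    proof (rule uniform_limitI)
      fix e :: real assume e: "e > 0"
      then have "e / (L + 1) > 0" using L by simp
      from uniform_limitD[OF ulim[OF t] this]
      show "\<forall>\<^sub>F n in sequentially. \<forall>s\<in>{0..t}. dist (g (?p n s)) (g (X s)) < e"
      proof (rule eventually_mono)
        fix n assume *: "\<forall>s\<in>{0..t}. dist (?p n s) (X s) < e / (L + 1)"
        show "\<forall>s\<in>{0..t}. dist (g (?p n s)) (g (X s)) < e"
        proof
          fix s assume s: "s \<in> {0..t}"
          have d: "dist (?p n s) (X s) < e / (L + 1)" using * s by blast
          have "dist (g (?p n s)) (g (X s)) \<le> L * dist (?p n s) (X s)"
            using lip by (simp add: dist_norm)
          also have "\<dots> \<le> (L + 1) * dist (?p n s) (X s)" by (simp add: algebra_simps)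
          also have "\<dots> < e" using d L by (simp add: field_simps)
          finally show "dist (g (?p n s)) (g (X s)) < e" .
        qed
      qed
    qed
    obtain I J where I: "\<And>n. ((\<lambda>s. g (?p n s)) has_integral I n) {0..t}"
      and J: "((\<lambda>s. g (X s)) has_integral J) {0..t}" and IJ: "I \<longlonglongrightarrow> J"
      using uniform_limit_integral[OF ul2 gpcont] by auto
    have In: "I n = ?p (Suc n) t - \<theta>" for n
      using integral_unique[OF I[of n]] by simp
    have "(\<lambda>n. ?p n t) \<longlonglongrightarrow> X t"
      using tendsto_uniform_limitI[OF ulim[OF t], of t] t by simp
    then have "(\<lambda>n. ?p (Suc n) t - \<theta>) \<longlonglongrightarrow> X t - \<theta>"
      by (intro tendsto_diff tendsto_const) (rule LIMSEQ_Suc)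
    moreover have "(\<lambda>n. ?p (Suc n) t - \<theta>) \<longlonglongrightarrow> J" using IJ In by (metis (no_types, lifting) ext)
    ultimately have "X t - \<theta> = J" by (rule LIMSEQ_unique)
    then show ?thesis using integral_unique[OF J] by (simp add: algebra_simps)
  qed
  have Xder: "(X has_vector_derivative g (X t)) (at t within {0..})" if t: "t \<ge> 0" for t
  proof -
    have c1: "continuous_on {0..t+1} (\<lambda>s. g (X s))"
      using continuous_on_compose2[OF gcont Xcont[of "t+1"]] t by auto
    have "((\<lambda>u. \<theta> + integral {0..u} (\<lambda>s. g (X s))) has_vector_derivative g (X t)) (at t within {0..t+1})"
      using integral_has_vector_derivative[OF c1, of t] t
      by (auto intro!: derivative_eq_intros)
    moreover have "at t within {0..t+1} = at t within {0..}"
      by (rule at_within_nhd[where S="{t - 1 <..< t + 1}"]) auto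
    ultimately have "((\<lambda>u. \<theta> + integral {0..u} (\<lambda>s. g (X s))) has_vector_derivative g (X t)) (at t within {0..})"
      by simp
    then show ?thesis
      by (rule has_vector_derivative_transform_within[where d=1]) (use t XI in auto)
  qed
  have "X 0 = \<theta>" using XI[of 0] by simp
  then show ?thesis using Xder unfolding ode_sol_def by blast
qed


lemma ode_sol_shift:
  assumes "ode_sol g x" "s \<ge> 0"
  shows "ode_sol g (\<lambda>t. x (s + t))"
  unfolding ode_sol_def
proof (intro allI impI)
  fix t :: real assume t: "t \<ge> 0"
  have "(x has_vector_derivative g (x (s + t))) (at (s + t) within {0..})"
    using assms t unfolding ode_sol_def by auto
  then have "(x has_vector_derivative g (x (s + t))) (at (s + t) within ((+) s ` {0..}))"
    by (rule has_vector_derivative_within_subset) (use assms in auto)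
  then have "((\<lambda>t. x (s + t)) has_vector_derivative 1 *\<^sub>R g (x (s + t))) (at t within {0..})"
    by (intro vector_diff_chain_within[unfolded o_def]) (auto intro!: derivative_eq_intros)
  then show "((\<lambda>t. x (s + t)) has_vector_derivative g (x (s + t))) (at t within {0..})" by simp
qed

lemma ode_sol_scale:
  assumes "ode_sol g x" and hom: "\<And>v. g (c *\<^sub>R v) = c *\<^sub>R g v"
  shows "ode_sol g (\<lambda>t. c *\<^sub>R x t)"
  unfolding ode_sol_def
proof (intro allI impI)
  fix t :: real assume t: "t \<ge> 0"
  have "(x has_vector_derivative g (x t)) (at t within {0..})"
    using assms t unfolding ode_sol_def by auto
  then have "((\<lambda>t. c *\<^sub>R x t) has_vector_derivative c *\<^sub>R g (x t)) (at t within {0..})"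
    by (auto intro!: derivative_eq_intros)
  then show "((\<lambda>t. c *\<^sub>R x t) has_vector_derivative g (c *\<^sub>R x t)) (at t within {0..})"
    by (simp add: hom)
qed


lemma finf_props:
  fixes f F :: "'a::euclidean_space \<Rightarrow> 'a"
  assumes lipf: "\<And>u v. norm (f u - f v) \<le> L * norm (u - v)" and L: "L \<ge> 0"
    and lim: "\<And>\<theta>. ((\<lambda>r. (1 / r) *\<^sub>R f (r *\<^sub>R \<theta>)) \<longlongrightarrow> F \<theta>) at_top"
  shows "\<And>u v. norm (F u - F v) \<le> L * norm (u - v)"
    and "F 0 = 0"
    and "\<And>c v. c > 0 \<Longrightarrow> F (c *\<^sub>R v) = c *\<^sub>R F v"
    and "\<And>\<eta> B. \<eta> > 0 \<Longrightarrow> \<exists>R>0. \<forall>r\<ge>R. \<forall>\<theta>. norm \<theta> \<le> B \<longrightarrow>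
            norm ((1 / r) *\<^sub>R f (r *\<^sub>R \<theta>) - F \<theta>) \<le> \<eta>"
proof -
  define h where "h r \<theta> = (1 / r) *\<^sub>R f (r *\<^sub>R \<theta>)" for r \<theta>
  have hlip: "norm (h r u - h r v) \<le> L * norm (u - v)" if "r > 0" for r u v
  proof -
    have "h r u - h r v = (1 / r) *\<^sub>R (f (r *\<^sub>R u) - f (r *\<^sub>R v))"
      by (simp add: h_def scaleR_diff_right)
    then have "norm (h r u - h r v) = (1 / r) * norm (f (r *\<^sub>R u) - f (r *\<^sub>R v))"
      using that by simp
    also have "\<dots> \<le> (1 / r) * (L * norm (r *\<^sub>R u - r *\<^sub>R v))"
      using that lipf by (intro mult_left_mono) auto
    also have "\<dots> = L * norm (u - v)"
      using that by (simp add: scaleR_diff_right[symmetric])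
    finally show ?thesis .
  qed
  have limh: "((\<lambda>r. h r \<theta>) \<longlongrightarrow> F \<theta>) at_top" for \<theta> using lim by (simp add: h_def)
  have evpos: "eventually (\<lambda>r::real. r > 0) at_top" by (rule eventually_gt_at_top)
  show Flip: "norm (F u - F v) \<le> L * norm (u - v)" for u v
  proof (rule tendsto_le[OF trivial_limit_at_top_linorder])
    show "((\<lambda>r. norm (h r u - h r v)) \<longlongrightarrow> norm (F u - F v)) at_top"
      by (intro tendsto_intros limh)
    show "((\<lambda>r. L * norm (u - v)) \<longlongrightarrow> L * norm (u - v)) at_top" by simp
    show "\<forall>\<^sub>F r in at_top. norm (h r u - h r v) \<le> L * norm (u - v)"
      using evpos by eventually_elim (rule hlip)
  qed
  show "F 0 = 0"
  proof -
    have "((\<lambda>r. (1 / r) *\<^sub>R f 0) \<longlongrightarrow> 0 *\<^sub>R f 0) at_top"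
      by (intro tendsto_intros tendsto_divide_0[OF tendsto_const] filterlim_ident) (rule filterlim_at_top_imp_at_infinity[OF filterlim_ident])
    then have "((\<lambda>r. h r 0) \<longlongrightarrow> 0) at_top" by (simp add: h_def)
    then show ?thesis using limh[of 0] tendsto_unique[OF trivial_limit_at_top_linorder] by blast
  qed
  show "F (c *\<^sub>R v) = c *\<^sub>R F v" if c: "c > 0" for c v
  proof -
    have "filterlim (\<lambda>r. c * r) at_top at_top"
      by (rule filterlim_tendsto_pos_mult_at_top[OF tendsto_const c filterlim_ident])
    then have "((\<lambda>r. h (c * r) v) \<longlongrightarrow> F v) at_top"
      by (rule filterlim_compose[OF limh])
    then have X: "((\<lambda>r. c *\<^sub>R h (c * r) v) \<longlongrightarrow> c *\<^sub>R F v) at_top"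
      by (intro tendsto_intros)
    have hc: "c *\<^sub>R h (c * r) v = h r (c *\<^sub>R v)" if "r > 0" for r
    proof -
      have e1: "(c * r) *\<^sub>R v = r *\<^sub>R (c *\<^sub>R v)" by (simp add: mult.commute)
      have e2: "c * (1 / (c * r)) = 1 / r" using c that by simp
      show ?thesis unfolding h_def e1 scaleR_scaleR e2 ..
    qed
    have ev: "eventually (\<lambda>r. c *\<^sub>R h (c * r) v = h r (c *\<^sub>R v)) at_top"
      using evpos by (rule eventually_mono) (rule hc)
    have "((\<lambda>r. h r (c *\<^sub>R v)) \<longlongrightarrow> c *\<^sub>R F v) at_top"
      using tendsto_cong[OF ev] X by (rule iffD1)
    then show ?thesis using limh[of "c *\<^sub>R v"] tendsto_unique[OF trivial_limit_at_top_linorder] by blast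
  qed
  show "\<exists>R>0. \<forall>r\<ge>R. \<forall>\<theta>. norm \<theta> \<le> B \<longrightarrow> norm ((1 / r) *\<^sub>R f (r *\<^sub>R \<theta>) - F \<theta>) \<le> \<eta>"
    if eta: "\<eta> > 0" for \<eta> B
  proof -
    define \<rho> where "\<rho> = \<eta> / (4 * (L + 1))"
    have rho: "\<rho> > 0" using eta L by (simp add: \<rho>_def)
    have Lrho: "L * \<rho> \<le> \<eta> / 4"
    proof -
      have "L * \<rho> \<le> (L + 1) * \<rho>" using rho by (simp add: algebra_simps)
      also have "\<dots> = \<eta> / 4"
      proof -
        have "4 * L + 4 \<noteq> 0" using L by simp
        then show ?thesis unfolding \<rho>_def by (simp add: divide_simps)
      qed
      finally show ?thesis .
    qed
    have opn: "\<And>p::'a. p \<in> cball 0 B \<Longrightarrow> open (ball p \<rho>)" by simp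
    have cov: "cball (0::'a) B \<subseteq> (\<Union>p\<in>cball 0 B. ball p \<rho>)"
    proof (rule subsetI)
      fix x assume x: "x \<in> cball (0::'a) B"
      show "x \<in> (\<Union>p\<in>cball 0 B. ball p \<rho>)" by (rule UN_I[OF x]) (simp add: rho)
    qed
    obtain P :: "'a set" where P: "P \<subseteq> cball 0 B" "finite P" "cball 0 B \<subseteq> (\<Union>p\<in>P. ball p \<rho>)"
      using compactE_image[OF compact_cball opn cov] by blast
    have "\<forall>p\<in>P. eventually (\<lambda>r. dist (h r p) (F p) < \<eta> / 2) at_top"
    proof
      fix p assume "p \<in> P"
      have "\<eta> / 2 > 0" using eta by simp
      then show "eventually (\<lambda>r. dist (h r p) (F p) < \<eta> / 2) at_top"
        using limh[of p] unfolding tendsto_iff by blast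
    qed
    then have "eventually (\<lambda>r. \<forall>p\<in>P. dist (h r p) (F p) < \<eta> / 2) at_top"
      by (rule eventually_ball_finite[OF P(2)])
    with evpos have "eventually (\<lambda>r. r > 0 \<and> (\<forall>p\<in>P. dist (h r p) (F p) < \<eta> / 2)) at_top"
      by (rule eventually_conj)
    then obtain N where N: "\<And>r. r \<ge> N \<Longrightarrow> r > 0 \<and> (\<forall>p\<in>P. dist (h r p) (F p) < \<eta> / 2)"
      unfolding eventually_at_top_linorder by blast
    show ?thesis
    proof (intro exI[of _ "max N 1"] conjI allI impI)
      fix r and \<theta> :: 'a assume r: "max N 1 \<le> r" and th: "norm \<theta> \<le> B"
      then have rN: "r > 0" "\<forall>p\<in>P. dist (h r p) (F p) < \<eta> / 2" using N by auto
      obtain p where p: "p \<in> P" "\<theta> \<in> ball p \<rho>" using P(3) th by auto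
      have "h r \<theta> - F \<theta> = (h r \<theta> - h r p) + (h r p - F p) + (F p - F \<theta>)" by simp
      then have "norm (h r \<theta> - F \<theta>) \<le> norm (h r \<theta> - h r p) + norm (h r p - F p) + norm (F p - F \<theta>)"
        by (smt (verit, best) norm_triangle_ineq)
      also have "\<dots> \<le> L * \<rho> + \<eta> / 2 + L * \<rho>"
      proof -
        have dp: "norm (\<theta> - p) < \<rho>" "norm (p - \<theta>) < \<rho>" using p(2) by (auto simp: dist_norm norm_minus_commute)
        have "norm (h r \<theta> - h r p) \<le> L * \<rho>"
          using hlip[OF rN(1), of \<theta> p] mult_left_mono[OF less_imp_le[OF dp(1)] L] by linarith
        moreover have "norm (F p - F \<theta>) \<le> L * \<rho>"
          using Flip[of p \<theta>] mult_left_mono[OF less_imp_le[OF dp(2)] L] by linarith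
        moreover have "norm (h r p - F p) \<le> \<eta> / 2" using rN(2) p(1) by (auto simp: dist_norm)
        ultimately show ?thesis by linarith
      qed
      also have "\<dots> \<le> \<eta>" using Lrho by linarith
      finally show "norm ((1 / r) *\<^sub>R f (r *\<^sub>R \<theta>) - F \<theta>) \<le> \<eta>" by (simp add: h_def)
    qed simp
  qed
qed


lemma sol_diff_bound:
  fixes F :: "'a::euclidean_space \<Rightarrow> 'a"
  assumes Flip: "\<And>u v. norm (F u - F v) \<le> L * norm (u - v)" and L: "L \<ge> 0"
    and z1: "ode_sol F z1" and z2: "ode_sol F z2"
    and d0: "norm (z1 0 - z2 0) < c" and c: "c > 0" and t: "t \<ge> 0"
  shows "norm (z1 t - z2 t) < c * exp ((L + 1) * t)"
proof (rule growth_bound[where d="\<lambda>t. z1 t - z2 t" and d'="\<lambda>t. F (z1 t) - F (z2 t)" and T=t and \<eta>=0])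
  fix s assume s: "s \<in> {0..t}"
  show "((\<lambda>t. z1 t - z2 t) has_vector_derivative F (z1 s) - F (z2 s)) (at s within {0..})"
    using z1 z2 s unfolding ode_sol_def by (auto intro!: derivative_intros)
  show "norm (F (z1 s) - F (z2 s)) \<le> L * norm (z1 s - z2 s) + 0" using Flip by simp
qed (use assms in auto)

lemma T_choice:
  fixes F :: "'a::euclidean_space \<Rightarrow> 'a"
  assumes Flip: "\<And>u v. norm (F u - F v) \<le> L * norm (u - v)" and L: "L \<ge> 0"
    and hom: "\<And>c v. c > 0 \<Longrightarrow> F (c *\<^sub>R v) = c *\<^sub>R F v"
    and stab: "origin_asymp_stable F"
  shows "\<exists>T\<ge>1. \<forall>z. ode_sol F z \<and> norm (z 0) \<le> 1 \<longrightarrow> norm (z T) < 1/4"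
proof -
  obtain \<delta>s where \<delta>s: "\<delta>s > 0"
    and S: "\<And>x. ode_sol F x \<Longrightarrow> norm (x 0) < \<delta>s \<Longrightarrow> (\<forall>t\<ge>0. norm (x t) < 1/4)"
    using stab unfolding origin_asymp_stable_def
    by (metis divide_pos_pos zero_less_numeral zero_less_one)
  obtain \<delta>a where \<delta>a: "\<delta>a > 0"
    and A: "\<And>x. ode_sol F x \<Longrightarrow> norm (x 0) < \<delta>a \<Longrightarrow> (x \<longlongrightarrow> 0) at_top"
    using stab unfolding origin_asymp_stable_def by blast
  have ex: "\<exists>p. fst p \<ge> 0 \<and> ode_sol F (snd p) \<and> snd p 0 = \<theta> \<and> norm (snd p (fst p)) < \<delta>s / 2"
    if th: "\<theta> \<in> cball 0 1" for \<theta>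
  proof -
    obtain z where z0: "z 0 = \<theta>" and z: "ode_sol F z"
      using picard_exists[of F L \<theta>] Flip L by blast
    define w where "w t = (\<delta>a / 2) *\<^sub>R z t" for t
    have w: "ode_sol F w" unfolding w_def
      by (rule ode_sol_scale[OF z]) (rule hom, use \<delta>a in simp)
    have "norm (w 0) = \<delta>a / 2 * norm \<theta>" using \<delta>a z0 by (simp add: w_def)
    also have "\<dots> \<le> \<delta>a / 2" using th \<delta>a by (simp add: mult_left_le)
    also have "\<dots> < \<delta>a" using \<delta>a by simp
    finally have "(w \<longlongrightarrow> 0) at_top" by (rule A[OF w])
    then have "((\<lambda>t. (2 / \<delta>a) *\<^sub>R w t) \<longlongrightarrow> (2 / \<delta>a) *\<^sub>R 0) at_top"
      by (intro tendsto_intros)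
    moreover have "(\<lambda>t. (2 / \<delta>a) *\<^sub>R w t) = z" using \<delta>a by (simp add: w_def fun_eq_iff)
    ultimately have "(z \<longlongrightarrow> 0) at_top" by simp
    moreover have "\<delta>s / 2 > 0" using \<delta>s by simp
    ultimately have "eventually (\<lambda>t. dist (z t) 0 < \<delta>s / 2) at_top"
      unfolding tendsto_iff by blast
    then obtain N where N: "\<And>t. t \<ge> N \<Longrightarrow> norm (z t) < \<delta>s / 2"
      unfolding eventually_at_top_linorder by auto
    show ?thesis
      by (rule exI[of _ "(max N 0, z)"]) (use N z z0 in auto)
  qed
  then obtain pp where pp: "\<And>\<theta>. \<theta> \<in> cball 0 1 \<Longrightarrow> fst (pp \<theta>) \<ge> 0 \<and> ode_sol F (snd (pp \<theta>)) \<and>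
      snd (pp \<theta>) 0 = \<theta> \<and> norm (snd (pp \<theta>) (fst (pp \<theta>))) < \<delta>s / 2"
    by metis
  define tt where "tt \<theta> = fst (pp \<theta>)" for \<theta>
  define zz where "zz \<theta> = snd (pp \<theta>)" for \<theta>
  define rad where "rad \<theta> = \<delta>s / 2 * exp (- ((L + 1) * tt \<theta>))" for \<theta>
  have opn: "\<And>\<theta>::'a. \<theta> \<in> cball 0 1 \<Longrightarrow> open (ball \<theta> (rad \<theta>))" by simp
  have cov: "cball (0::'a) 1 \<subseteq> (\<Union>\<theta>\<in>cball 0 1. ball \<theta> (rad \<theta>))"
  proof (rule subsetI)
    fix x assume x: "x \<in> cball (0::'a) 1"
    have "rad x > 0" using \<delta>s by (simp add: rad_def)
    then show "x \<in> (\<Union>\<theta>\<in>cball 0 1. ball \<theta> (rad \<theta>))" by (intro UN_I[OF x]) simp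
  qed
  obtain Q :: "'a set" where Q: "Q \<subseteq> cball 0 1" "finite Q" "cball 0 1 \<subseteq> (\<Union>\<theta>\<in>Q. ball \<theta> (rad \<theta>))"
    using compactE_image[OF compact_cball opn cov] by blast
  define T where "T = Max (insert 1 (tt ` Q))"
  have T1: "T \<ge> 1" unfolding T_def using Q(2) by simp
  have Tq: "tt q \<le> T" if "q \<in> Q" for q unfolding T_def using Q(2) that by simp
  show ?thesis
  proof (intro exI[of _ T] conjI allI impI T1)
    fix z assume zz0: "ode_sol F z \<and> norm (z 0) \<le> 1"
    then have z: "ode_sol F z" and z0: "norm (z 0) \<le> 1" by auto
    obtain q where q: "q \<in> Q" "z 0 \<in> ball q (rad q)" using Q(3) z0 by auto
    have qc: "q \<in> cball 0 1" using q Q(1) by auto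
    note ppq = pp[OF qc]
    have tq: "tt q \<ge> 0" using ppq by (simp add: tt_def)
    have zq: "ode_sol F (zz q)" "zz q 0 = q" "norm (zz q (tt q)) < \<delta>s / 2"
      using ppq by (simp_all add: zz_def tt_def)
    have "norm (z 0 - zz q 0) < rad q" using q(2) zq(2) by (simp add: dist_norm norm_minus_commute)
    moreover have "rad q > 0" using \<delta>s by (simp add: rad_def)
    ultimately have "norm (z (tt q) - zz q (tt q)) < rad q * exp ((L + 1) * tt q)"
      by (intro sol_diff_bound[OF Flip L z zq(1)] tq)
    also have "\<dots> = \<delta>s / 2"
    proof -
      have "exp (- ((L + 1) * tt q)) * exp ((L + 1) * tt q) = 1" by (simp add: exp_minus)
      then show ?thesis unfolding rad_def by (metis mult.assoc mult_1_right)
    qed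
    finally have "norm (z (tt q) - zz q (tt q)) < \<delta>s / 2" .
    then have "norm (z (tt q)) < \<delta>s" using zq(3) norm_triangle_sub[of "z (tt q)" "zz q (tt q)"]
      by linarith
    then have "\<forall>s\<ge>0. norm (z (tt q + s)) < 1/4"
      using S[OF ode_sol_shift[OF z tq]] by simp
    moreover have "T - tt q \<ge> 0" using Tq[OF q(1)] by simp
    ultimately have "norm (z (tt q + (T - tt q))) < 1/4" by blast
    then show "norm (z T) < 1/4" by simp
  qed
qed


lemma partb:
  fixes f F :: "'a::euclidean_space \<Rightarrow> 'a"
  assumes lipf: "\<And>u v. norm (f u - f v) \<le> L * norm (u - v)" and L: "L \<ge> 0"
    and lim: "\<And>\<theta>. ((\<lambda>r. (1 / r) *\<^sub>R f (r *\<^sub>R \<theta>)) \<longlongrightarrow> F \<theta>) at_top"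
    and stab: "origin_asymp_stable F"
  shows "V4' f"
proof -
  note FP = finf_props[OF lipf L lim]
  obtain T where T1: "T \<ge> 1" and TT: "\<And>z. ode_sol F z \<Longrightarrow> norm (z 0) \<le> 1 \<Longrightarrow> norm (z T) < 1/4"
    using T_choice[OF FP(1) L FP(3) stab] by blast
  define K where "K = L + 1"
  define B where "B = 2 * exp (K * T)"
  define c where "c = exp (- (K * T)) / 4"
  define \<eta> where "\<eta> = c / 2"
  have c: "c > 0" by (simp add: c_def)
  have eta: "\<eta> > 0" using c by (simp add: \<eta>_def)
  obtain R where R: "R > 0" and RU: "\<And>r \<theta>. r \<ge> R \<Longrightarrow> norm \<theta> \<le> B \<Longrightarrow>
      norm ((1 / r) *\<^sub>R f (r *\<^sub>R \<theta>) - F \<theta>) \<le> \<eta>"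
    using FP(4)[OF eta, of B] by blast
  have hlip: "norm ((1 / r) *\<^sub>R f (r *\<^sub>R u) - (1 / r) *\<^sub>R f (r *\<^sub>R v)) \<le> L * norm (u - v)"
    if "r > 0" for r u v
  proof -
    have "(1 / r) *\<^sub>R f (r *\<^sub>R u) - (1 / r) *\<^sub>R f (r *\<^sub>R v) = (1 / r) *\<^sub>R (f (r *\<^sub>R u) - f (r *\<^sub>R v))"
      by (simp add: scaleR_diff_right)
    then have "norm ((1 / r) *\<^sub>R f (r *\<^sub>R u) - (1 / r) *\<^sub>R f (r *\<^sub>R v)) = (1 / r) * norm (f (r *\<^sub>R u) - f (r *\<^sub>R v))"
      using that by simp
    also have "\<dots> \<le> (1 / r) * (L * norm (r *\<^sub>R u - r *\<^sub>R v))"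
      using that lipf by (intro mult_left_mono) auto
    also have "\<dots> = L * norm (u - v)"
      using that by (simp add: scaleR_diff_right[symmetric])
    finally show ?thesis .
  qed
  have main: "norm (x (\<tau> + T)) < norm (x \<tau>) / 2"
    if x: "ode_sol f x" and tau: "\<tau> \<ge> 0" and xR: "norm (x \<tau>) \<ge> R" for x \<tau>
  proof -
    define r where "r = norm (x \<tau>)"
    have r: "r > 0" "r \<ge> R" using R xR by (auto simp: r_def)
    define y where "y t = (1 / r) *\<^sub>R x (\<tau> + t)" for t
    have ry: "r *\<^sub>R y t = x (\<tau> + t)" for t using r by (simp add: y_def)
    have yder: "(y has_vector_derivative (1 / r) *\<^sub>R f (r *\<^sub>R y t)) (at t within {0..})" if t: "t \<ge> 0" for t
    proof -
      have "((\<lambda>t. x (\<tau> + t)) has_vector_derivative f (x (\<tau> + t))) (at t within {0..})"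
        using ode_sol_shift[OF x tau] t unfolding ode_sol_def by blast
      then have "((\<lambda>t. (1 / r) *\<^sub>R x (\<tau> + t)) has_vector_derivative (1 / r) *\<^sub>R f (x (\<tau> + t))) (at t within {0..})"
        using has_vector_derivative_scaleR[OF DERIV_const[of "1 / r"]] by simp
      then show ?thesis unfolding ry by (simp add: y_def[abs_def])
    qed
    have y0: "norm (y 0) = 1" using r by (simp add: y_def r_def)
    obtain z where z0: "z 0 = y 0" and z: "ode_sol F z"
      using picard_exists[of F L "y 0"] FP(1) L by blast
    have zero: "ode_sol F (\<lambda>_. 0)" unfolding ode_sol_def using FP(2) by simp
    have zb: "norm (z t) \<le> B" if t: "t \<in> {0..T}" for t
    proof -
      have "norm (z t - 0) < 2 * exp ((L + 1) * t)"
        by (rule sol_diff_bound[OF FP(1) L z zero]) (use y0 z0 t in auto)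
      also have "\<dots> \<le> B" unfolding B_def K_def using t L by (simp add: mult_left_mono)
      finally show ?thesis by simp
    qed
    have "norm (y T - z T) < c * exp (K * T)"
    proof (rule growth_bound[where d="\<lambda>t. y t - z t" and d'="\<lambda>t. (1 / r) *\<^sub>R f (r *\<^sub>R y t) - F (z t)"
          and T=T and L=L and \<eta>=\<eta>])
      fix t assume t: "t \<in> {0..T}"
      show "((\<lambda>t. y t - z t) has_vector_derivative (1 / r) *\<^sub>R f (r *\<^sub>R y t) - F (z t)) (at t within {0..})"
        using yder[of t] z t unfolding ode_sol_def by (auto intro!: derivative_intros)
      have "norm ((1 / r) *\<^sub>R f (r *\<^sub>R y t) - F (z t)) \<le>
          norm ((1 / r) *\<^sub>R f (r *\<^sub>R y t) - (1 / r) *\<^sub>R f (r *\<^sub>R z t)) + norm ((1 / r) *\<^sub>R f (r *\<^sub>R z t) - F (z t))"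
        by (rule norm_diff_triangle_ineq[THEN order_trans[rotated]]) (simp add: algebra_simps)
      also have "\<dots> \<le> L * norm (y t - z t) + \<eta>"
        using hlip[OF r(1), of "y t" "z t"] RU[OF r(2) zb[OF t]] by linarith
      finally show "norm ((1 / r) *\<^sub>R f (r *\<^sub>R y t) - F (z t)) \<le> L * norm (y t - z t) + \<eta>" .
    next
      show "norm (y 0 - z 0) < c" using z0 c by simp
      show "L + \<eta> / c < K" using c by (simp add: \<eta>_def K_def)
    qed (use c L eta T1 in auto)
    also have "c * exp (K * T) = 1/4" by (simp add: c_def exp_minus)
    finally have d: "norm (y T - z T) < 1/4" .
    have "norm (z T) < 1/4" using TT[OF z] z0 y0 by simp
    then have "norm (y T) < 1/2" using d norm_triangle_sub[of "y T" "z T"] by linarith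
    moreover have "norm (x (\<tau> + T)) = r * norm (y T)" by (metis ry norm_scaleR abs_of_pos r(1))
    ultimately show ?thesis using r unfolding r_def[symmetric] by simp
  qed
  define \<delta>1 where "\<delta>1 = min (1/2) (1 / R)"
  have d1: "\<delta>1 > 0" "\<delta>1 \<le> 1/2" using R by (auto simp: \<delta>1_def)
  have d1R: "1 / \<delta>1 \<ge> R"
  proof -
    have "\<delta>1 \<le> 1 / R" by (simp add: \<delta>1_def)
    then have "R * \<delta>1 \<le> 1" using R by (simp add: field_simps)
    then show ?thesis using d1 by (simp add: field_simps)
  qed
  have fin: "norm (x (\<tau> + T)) - norm (x \<tau>) \<le> - \<delta>1 * norm (x \<tau>)"
    if x: "ode_sol f x" and tau: "0 \<le> \<tau>" and big: "1 / \<delta>1 < norm (x \<tau>)" for x \<tau>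
  proof -
    have "norm (x (\<tau> + T)) < norm (x \<tau>) / 2" using main[OF x tau] big d1R by simp
    moreover have "\<delta>1 * norm (x \<tau>) \<le> 1/2 * norm (x \<tau>)" using d1(2) by (rule mult_right_mono) simp
    ultimately show ?thesis by simp
  qed
  have T0: "T > 0" using T1 by simp
  show ?thesis
    unfolding V4'_def
    apply (rule exI[of _ norm], rule exI[of _ 1], rule exI[of _ 1], rule exI[of _ \<delta>1], rule exI[of _ T])
    using d1 T0 fin norm_triangle_ineq3 by auto
qed


lemma parta:
  fixes f :: "'a::euclidean_space \<Rightarrow> 'a"
  assumes "V4 f"
  shows "V4' f"
proof -
  obtain V \<delta>0 LV where C1: "C1_fun V" and V1: "\<And>\<theta>. V \<theta> \<ge> 1" and d0: "\<delta>0 > 0"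
    and dec: "\<And>x \<tau> D. ode_sol f x \<Longrightarrow> \<tau> \<ge> 0 \<Longrightarrow> norm (x \<tau>) \<ge> 1 / \<delta>0 \<Longrightarrow>
        ((\<lambda>t. V (x t)) has_real_derivative D) (at \<tau> within {0..}) \<Longrightarrow> D \<le> - \<delta>0 * V (x \<tau>)"
    and Vlip: "\<And>\<theta> \<theta>'. \<bar>V \<theta>' - V \<theta>\<bar> \<le> LV * norm (\<theta>' - \<theta>)"
    and Vnorm: "\<And>\<theta>. norm \<theta> \<ge> 1 / \<delta>0 \<Longrightarrow> V \<theta> \<ge> norm \<theta>"
    using assms unfolding V4_def by blast
  obtain V' :: "'a \<Rightarrow> 'a \<Rightarrow>\<^sub>L real" where Vder: "\<And>y. (V has_derivative blinfun_apply (V' y)) (at y)"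
    using C1 unfolding C1_fun_def by blast
  have chain: "((\<lambda>t. V (x t)) has_real_derivative blinfun_apply (V' (x t)) (f (x t))) (at t within {0..})"
    if x: "ode_sol f x" and t: "t \<ge> 0" for x t
  proof -
    have "(x has_derivative (\<lambda>h. h *\<^sub>R f (x t))) (at t within {0..})"
      using x t unfolding ode_sol_def has_vector_derivative_def by blast
    from has_derivative_compose[OF this Vder]
    have "((\<lambda>t. V (x t)) has_derivative (\<lambda>h. blinfun_apply (V' (x t)) (h *\<^sub>R f (x t)))) (at t within {0..})" .
    moreover have "(\<lambda>h. blinfun_apply (V' (x t)) (h *\<^sub>R f (x t))) = (*) (blinfun_apply (V' (x t)) (f (x t)))"
      by (simp add: fun_eq_iff blinfun.scaleR_right)
    ultimately show ?thesis by (simp add: has_field_derivative_def)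
  qed
  have Wmono: "exp (\<delta>0 * b) * V (x b) \<le> exp (\<delta>0 * a) * V (x a)"
    if x: "ode_sol f x" and ab: "0 \<le> a" "a \<le> b" and out: "\<And>t. a < t \<Longrightarrow> t < b \<Longrightarrow> norm (x t) \<ge> 1 / \<delta>0"
    for x a b
  proof (rule DERIV_nonpos_imp_decreasing_open[OF ab(2)])
    fix t assume t: "a < t" "t < b"
    have t0: "t \<ge> 0" using t ab by simp
    have eq: "at t within {0..} = at t within UNIV"
      by (rule at_within_nhd[where S="{0<..}"]) (use t ab in auto)
    have dV: "((\<lambda>t. V (x t)) has_real_derivative blinfun_apply (V' (x t)) (f (x t))) (at t within UNIV)"
      using chain[OF x t0] unfolding eq .
    have le: "blinfun_apply (V' (x t)) (f (x t)) \<le> - \<delta>0 * V (x t)"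
      by (rule dec[OF x t0 out[OF t] chain[OF x t0]])
    have dE: "((\<lambda>t. exp (\<delta>0 * t)) has_real_derivative exp (\<delta>0 * t) * \<delta>0) (at t)"
      by (auto intro!: derivative_eq_intros)
    have "((\<lambda>t. exp (\<delta>0 * t) * V (x t)) has_real_derivative
        (exp (\<delta>0 * t) * \<delta>0) * V (x t) + blinfun_apply (V' (x t)) (f (x t)) * exp (\<delta>0 * t)) (at t)"
      using DERIV_mult[OF dE dV] by simp
    moreover have "(exp (\<delta>0 * t) * \<delta>0) * V (x t) + blinfun_apply (V' (x t)) (f (x t)) * exp (\<delta>0 * t) \<le> 0"
    proof -
      have "exp (\<delta>0 * t) * (\<delta>0 * V (x t) + blinfun_apply (V' (x t)) (f (x t))) \<le> 0"
        using le by (intro mult_nonneg_nonpos) auto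
      then show ?thesis by (simp add: algebra_simps)
    qed
    ultimately show "\<exists>y. ((\<lambda>t. exp (\<delta>0 * t) * V (x t)) has_real_derivative y) (at t) \<and> y \<le> 0" by blast
  next
    show "continuous_on {a..b} (\<lambda>t. exp (\<delta>0 * t) * V (x t))"
      unfolding continuous_on_eq_continuous_within
    proof
      fix t assume t: "t \<in> {a..b}"
      then have t0: "t \<ge> 0" using ab by simp
      have "continuous (at t within {0..}) (\<lambda>t. exp (\<delta>0 * t) * V (x t))"
        by (intro continuous_intros DERIV_continuous[OF chain[OF x t0]])
      then show "continuous (at t within {a..b}) (\<lambda>t. exp (\<delta>0 * t) * V (x t))"
        by (rule continuous_within_subset) (use ab in auto)
    qed
  qed
  define C where "C = V 0 + \<bar>LV\<bar> / \<delta>0"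
  have VC: "V \<theta> \<le> C" if "norm \<theta> \<le> 1 / \<delta>0" for \<theta>
  proof -
    have "V \<theta> - V 0 \<le> LV * norm \<theta>" using Vlip[of 0 \<theta>] by simp
    also have "\<dots> \<le> \<bar>LV\<bar> * norm \<theta>" by (simp add: mult_right_mono)
    also have "\<dots> \<le> \<bar>LV\<bar> * (1 / \<delta>0)" using mult_left_mono[OF that abs_ge_zero[of LV]] .
    finally show ?thesis by (simp add: C_def)
  qed
  have C1': "C \<ge> 1"
  proof -
    have "\<bar>LV\<bar> / \<delta>0 \<ge> 0" using d0 by simp
    then show ?thesis using V1[of 0] unfolding C_def by linarith
  qed
  define e where "e = 1 - exp (- \<delta>0)"
  have e: "e > 0" using d0 by (simp add: e_def)
  define \<delta>1 where "\<delta>1 = min (min (1/2) \<delta>0) (min e (1 / (2 * C)))"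
  have d1: "\<delta>1 > 0" "\<delta>1 \<le> 1/2" "\<delta>1 \<le> \<delta>0" "\<delta>1 \<le> e" "\<delta>1 \<le> 1 / (2 * C)"
    using d0 e C1' by (auto simp: \<delta>1_def)
  have key: "V (x (\<tau> + 1)) - V (x \<tau>) \<le> - \<delta>1 * norm (x \<tau>)"
    if x: "ode_sol f x" and tau: "\<tau> \<ge> 0" and big: "norm (x \<tau>) > 1 / \<delta>1" for x \<tau>
  proof -
    define n where "n = norm (x \<tau>)"
    have dn: "\<delta>1 * n > 1" using big d1 by (simp add: n_def field_simps)
    have "\<delta>0 * n \<ge> \<delta>1 * n" using d1 by (intro mult_right_mono) (auto simp: n_def)
    then have "\<delta>0 * n > 1" using dn by linarith
    then have nd0: "n \<ge> 1 / \<delta>0" using d0 by (simp add: field_simps)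
    have Vn: "V (x \<tau>) \<ge> n" using Vnorm nd0 by (simp add: n_def)
    have xcont: "continuous_on {\<tau>..\<tau>+1} x"
      unfolding continuous_on_eq_continuous_within
    proof
      fix t assume t: "t \<in> {\<tau>..\<tau>+1}"
      then have "(x has_vector_derivative f (x t)) (at t within {0..})"
        using x tau unfolding ode_sol_def by auto
      then have "continuous (at t within {0..}) x" by (rule has_vector_derivative_continuous)
      then show "continuous (at t within {\<tau>..\<tau>+1}) x"
        by (rule continuous_within_subset) (use tau in auto)
    qed
    define S where "S = {s \<in> {\<tau>..\<tau>+1}. norm (x s) \<le> 1 / \<delta>0}"
    show ?thesis
    proof (cases "S = {}")
      case True
      have "exp (\<delta>0 * (\<tau> + 1)) * V (x (\<tau> + 1)) \<le> exp (\<delta>0 * \<tau>) * V (x \<tau>)"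
      proof (rule Wmono[OF x tau])
        fix t assume "\<tau> < t" "t < \<tau> + 1"
        then have "t \<notin> S" using True by auto
        then show "norm (x t) \<ge> 1 / \<delta>0" using \<open>\<tau> < t\<close> \<open>t < \<tau> + 1\<close> by (auto simp: S_def)
      qed simp
      then have "exp (\<delta>0 * \<tau>) * (exp \<delta>0 * V (x (\<tau> + 1))) \<le> exp (\<delta>0 * \<tau>) * V (x \<tau>)"
        by (simp add: algebra_simps exp_add)
      then have "exp \<delta>0 * V (x (\<tau> + 1)) \<le> V (x \<tau>)" by simp
      then have "V (x (\<tau> + 1)) \<le> exp (- \<delta>0) * V (x \<tau>)"
        by (simp add: exp_minus field_simps)
      then have "V (x (\<tau> + 1)) - V (x \<tau>) \<le> - e * V (x \<tau>)" by (simp add: e_def algebra_simps)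
      also have "\<dots> \<le> - e * n" using Vn e by simp
      also have "\<dots> \<le> - \<delta>1 * n" using d1 by (intro mult_right_mono) (auto simp: n_def)
      finally show ?thesis by (simp add: n_def)
    next
      case False
      have "closed S" unfolding S_def
        by (intro continuous_on_closed_Collect_le continuous_intros xcont)
      moreover have "bdd_above S" unfolding S_def by (auto intro: bdd_aboveI[where M="\<tau>+1"])
      ultimately have sS: "Sup S \<in> S" using closed_contains_Sup False by blast
      define s where "s = Sup S"
      have s: "\<tau> \<le> s" "s \<le> \<tau> + 1" "norm (x s) \<le> 1 / \<delta>0" using sS by (auto simp: S_def s_def)
      have "exp (\<delta>0 * (\<tau> + 1)) * V (x (\<tau> + 1)) \<le> exp (\<delta>0 * s) * V (x s)"
      proof (rule Wmono[OF x])
        show "0 \<le> s" using s tau by simp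
        show "s \<le> \<tau> + 1" using s by simp
        fix t assume t: "s < t" "t < \<tau> + 1"
        have "t \<notin> S"
        proof
          assume "t \<in> S"
          then have "t \<le> s" unfolding s_def by (rule cSup_upper) fact
          then show False using t by simp
        qed
        then show "norm (x t) \<ge> 1 / \<delta>0" using t s by (auto simp: S_def)
      qed
      moreover have "exp (\<delta>0 * s) \<le> exp (\<delta>0 * (\<tau> + 1))" using s d0 by simp
      moreover have "V (x s) \<ge> 0" using V1 by (smt (verit))
      ultimately have "exp (\<delta>0 * (\<tau> + 1)) * V (x (\<tau> + 1)) \<le> exp (\<delta>0 * (\<tau> + 1)) * V (x s)"
        by (meson mult_right_mono order_trans)
      then have "V (x (\<tau> + 1)) \<le> V (x s)" by simp
      also have "\<dots> \<le> C" using VC s by simp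
      finally have A: "V (x (\<tau> + 1)) \<le> C" .
      have "2 * C * \<delta>1 \<le> 1" using d1(5) C1' by (simp add: field_simps)
      then have "2 * C * \<delta>1 \<le> \<delta>1 * n" using dn by linarith
      then have "2 * C \<le> n" using d1 by simp
      then have "C \<le> n - \<delta>1 * n"
      proof -
        have "\<delta>1 * n \<le> 1/2 * n" using d1 by (intro mult_right_mono) (auto simp: n_def)
        then show ?thesis using \<open>2 * C \<le> n\<close> by linarith
      qed
      then show ?thesis using A Vn by (simp add: n_def)
    qed
  qed
  show ?thesis
    unfolding V4'_def
    apply (rule exI[of _ V], rule exI[of _ LV], rule exI[of _ \<delta>0], rule exI[of _ \<delta>1], rule exI[of _ 1])
    using d0 d1 key Vlip Vnorm V1 by (auto intro: order_trans[OF zero_le_one])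
qed

theorem propositionA9:
  fixes fbar :: "'a::euclidean_space \<Rightarrow> 'a"
  assumes "\<exists>L. L-lipschitz_on UNIV fbar"
  shows "(V4 fbar \<longrightarrow> V4' fbar) \<and>
         ((\<forall>\<theta>. \<exists>l. ((\<lambda>r. (1 / r) *\<^sub>R fbar (r *\<^sub>R \<theta>)) \<longlongrightarrow> l) at_top) \<and>
          origin_asymp_stable (f_infty fbar) \<longrightarrow> V4' fbar)"
proof (intro conjI impI)
  show "V4' fbar" if "V4 fbar" using parta[OF that] .
  assume H: "(\<forall>\<theta>. \<exists>l. ((\<lambda>r. (1 / r) *\<^sub>R fbar (r *\<^sub>R \<theta>)) \<longlongrightarrow> l) at_top) \<and>
          origin_asymp_stable (f_infty fbar)"
  obtain L where Lf: "L-lipschitz_on UNIV fbar" using assms by blast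
  have L: "L \<ge> 0" using lipschitz_on_nonneg[OF Lf] .
  have lipf: "norm (fbar u - fbar v) \<le> L * norm (u - v)" for u v
    using lipschitz_onD[OF Lf, of u v] by (simp add: dist_norm)
  have lim: "((\<lambda>r. (1 / r) *\<^sub>R fbar (r *\<^sub>R \<theta>)) \<longlongrightarrow> f_infty fbar \<theta>) at_top" for \<theta>
  proof -
    obtain l where l: "((\<lambda>r. (1 / r) *\<^sub>R fbar (r *\<^sub>R \<theta>)) \<longlongrightarrow> l) at_top" using H by blast
    then have "f_infty fbar \<theta> = l"
      unfolding f_infty_def by (rule tendsto_Lim[OF trivial_limit_at_top_linorder])
    then show ?thesis using l by simp
  qed
  show "V4' fbar" by (rule partb[OF lipf L lim]) (use H in blast)
qed

end
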